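(* Assume (V1), (V2), (V3), and (In), and let $\delta>0$. Then for every $n\in\mathbb{N}$ and all $t\ge\delta$, $$\mathrm{TV}[v(\hat\rho^n(t))]=\mathrm{TV}[v(\check\rho^n(t))]\le C_\delta,\qquad C_\delta:=3(v_{\max}-v(R))+2\,\frac{\bar x_{\max}-\bar x_{\min}}{\delta}.$$ In particular $(v(\hat\rho^n))_n$ is uniformly bounded in $L^\infty([\delta,\infty);BV(\mathbb{R};[v(R),v_{\max}]))$ and $(v(\check\rho^n))_n$ is uniformly bounded in $L^\infty([\delta,\infty);BV([0,L];[v(R),v_{\max}]))$.
   Context: (V1): $v\in C^1([0,\infty))$ strictly decreasing; (V2): $v(0)=v_{\max}\in\mathbb{R}$; (V3): $\rho\mapsto\rho\,v'(\rho)$ is non-increasing on $[0,\infty)$. $\mathcal{M}_L$: nonnegative compactly supported Radon measures on $\mathbb{R}$ of mass $L>0$. (In): $\bar\rho\in\mathcal{M}_L\cap L^\infty(\mathbb{R})$; $R:=\|\bar\rho\|_{L^\infty}$; $[\bar x_{\min},\bar x_{\max}]$ smallest closed interval containing $\mathrm{supp}\,\bar\rho$. For $n\in\mathbb{N}$: $N_n=2^n$, $\ell_n=2^{-n}L$, $\bar x^n_0=\bar x_{\min}$, $\bar x^n_i=\sup\{x:\int_{\bar x^n_{i-1}}^x\bar\rho<\ell_n\}$; $(x^n_i(t))$ solves $\dot x^n_{N_n}=v_{\max}$, $\dot x^n_i=v(\ell_n/(x^n_{i+1}-x^n_i))$, $x^n_i(0)=\bar x^n_i$; $y^n_i:=\ell_n/(x^n_{i+1}-x^n_i)$.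 $\hat\rho^n(t,x):=\sum_{i=0}^{N_n-1}y^n_i(t)\chi_{[x^n_i(t),x^n_{i+1}(t))}(x)$, $\check\rho^n(t,z):=\sum_{i=0}^{N_n-1}y^n_i(t)\chi_{[i\ell_n,(i+1)\ell_n)}(z)$, $z\in[0,L]$. *)

theory Defs
  imports "HOL-Analysis.Analysis"
begin

definition TV :: "(real \<Rightarrow> real) \<Rightarrow> ereal" where
  "TV f = (SUP p \<in> {(m::nat, s::nat \<Rightarrow> real). \<forall>k<m. s k \<le> s (Suc k)}.
              ereal (\<Sum>k<fst p. \<bar>f (snd p (Suc k)) - f (snd p k)\<bar>))"

definition Linf_norm :: "(real \<Rightarrow> real) \<Rightarrow> real" where
  "Linf_norm f = Inf {c. AE x in lborel. \<bar>f x\<bar> \<le> c}"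

definition msupp :: "(real \<Rightarrow> real) \<Rightarrow> real set" where
  "msupp rho = {x. \<forall>e>0. (LINT y:{x-e..x+e}|lborel. rho y) > 0}"

definition xmin :: "(real \<Rightarrow> real) \<Rightarrow> real" where
  "xmin rho = Inf (msupp rho)"

definition xmax :: "(real \<Rightarrow> real) \<Rightarrow> real" where
  "xmax rho = Sup (msupp rho)"

definition Nn :: "nat \<Rightarrow> nat" where "Nn n = 2 ^ n"

definition elln :: "real \<Rightarrow> nat \<Rightarrow> real" where "elln L n = L / 2 ^ n"

primrec xbar :: "(real \<Rightarrow> real) \<Rightarrow> real \<Rightarrow> nat \<Rightarrow> nat \<Rightarrow> real" where
  "xbar rho L n 0 = xmin rho"
| "xbar rho L n (Suc i) =
     Sup {x. (LINT y:{xbar rho L n i..x}|lborel. rho y) < elln L n}"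

definition ydisc :: "real \<Rightarrow> (nat \<Rightarrow> nat \<Rightarrow> real \<Rightarrow> real) \<Rightarrow> nat \<Rightarrow> nat \<Rightarrow> real \<Rightarrow> real" where
  "ydisc L x n i t = elln L n / (x n (Suc i) t - x n i t)"

definition rho_hat :: "real \<Rightarrow> (nat \<Rightarrow> nat \<Rightarrow> real \<Rightarrow> real) \<Rightarrow> nat \<Rightarrow> real \<Rightarrow> real \<Rightarrow> real" where
  "rho_hat L x n t z = (\<Sum>i<Nn n. ydisc L x n i t * indicator {x n i t ..< x n (Suc i) t} z)"

definition rho_check :: "real \<Rightarrow> (nat \<Rightarrow> nat \<Rightarrow> real \<Rightarrow> real) \<Rightarrow> nat \<Rightarrow> real \<Rightarrow> real \<Rightarrow> real" where
  "rho_check L x n t z = (\<Sum>i<Nn n. ydisc L x n i t *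
       indicator {real i * elln L n ..< real (Suc i) * elln L n} z)"

definition FTL_solution ::
  "(real \<Rightarrow> real) \<Rightarrow> real \<Rightarrow> (real \<Rightarrow> real) \<Rightarrow> real \<Rightarrow> (nat \<Rightarrow> nat \<Rightarrow> real \<Rightarrow> real) \<Rightarrow> nat \<Rightarrow> bool" where
  "FTL_solution v vmax rho L x n \<longleftrightarrow>
     (\<forall>i\<le>Nn n. x n i 0 = xbar rho L n i) \<and>
     (\<forall>t\<ge>0. \<forall>i<Nn n. x n i t < x n (Suc i) t) \<and>
     (\<forall>t\<ge>0. (x n (Nn n) has_real_derivative vmax) (at t within {0..})) \<and>
     (\<forall>t\<ge>0. \<forall>i<Nn n. (x n i has_real_derivative v (ydisc L x n i t)) (at t within {0..}))"

end

theory Submission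
  imports Defs
begin


locale meas =
  fixes rho :: "real \<Rightarrow> real" and R :: real
  assumes int: "integrable lborel rho"
    and nn: "AE y in lborel. rho y \<ge> 0"
    and bnd: "AE y in lborel. \<bar>rho y\<bar> \<le> R"
begin

definition G :: "real \<Rightarrow> real" where "G x = (LINT y:{..x}|lborel. rho y)"

lemma si: "A \<in> sets borel \<Longrightarrow> set_integrable lborel A rho"
  unfolding set_integrable_def using int by (intro integrable_mult_indicator) auto

lemma meas_rho: "rho \<in> borel_measurable borel"
  using int by auto

lemma int_nonneg: "0 \<le> (LINT y:A|lborel. rho y)"
  unfolding set_lebesgue_integral_def
  by (rule integral_nonneg_AE) (use nn in \<open>auto simp: indicator_def\<close>)

lemma G_diff: assumes "a \<le> b" shows "(LINT y:{a..b}|lborel. rho y) = G b - G a"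
proof -
  have "{..b} = {..a} \<union> {a<..b}" using assms by auto
  hence "G b = G a + (LINT y:{a<..b}|lborel. rho y)"
    unfolding G_def by (simp, subst set_integral_Un) (auto intro: si)
  moreover have "(LINT y:{a..b}|lborel. rho y) = (LINT y:{a<..b}|lborel. rho y)"
    by (rule set_integral_cong_set)
      (use meas_rho AE_lborel_singleton[of a] in \<open>auto simp: set_borel_measurable_def elim!: eventually_mono\<close>)
  ultimately show ?thesis by simp
qed

lemma int_le: assumes "a \<le> b" shows "(LINT y:{a..b}|lborel. rho y) \<le> R * (b - a)"
proof -
  have "(LINT y:{a..b}|lborel. rho y) \<le> (LINT y:{a..b}|lborel. R)"
    by (rule set_integral_mono_AE) (use si bnd borel_integrable_atLeastAtMost'[of a b "\<lambda>_. R"] in \<open>auto elim!: eventually_mono\<close>)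
  also have "\<dots> = R * (b - a)" using assms by (simp add: set_integral_const)
  finally show ?thesis .
qed

lemma G_mono: "a \<le> b \<Longrightarrow> G a \<le> G b"
  using G_diff int_nonneg by (metis diff_ge_0_iff_ge)

lemma G_lip: "a \<le> b \<Longrightarrow> G b - G a \<le> R * (b - a)"
  using G_diff int_le by metis

lemma R_nonneg: "0 \<le> R"
proof -
  show ?thesis
  proof (rule ccontr)
    assume "\<not> 0 \<le> R"
    have "AE y in (lborel::real measure). False" using bnd
    proof (rule eventually_mono)
      fix y assume "\<bar>rho y\<bar> \<le> R" thus False using \<open>\<not> 0 \<le> R\<close> by linarith
    qed
    hence "ae_filter (lborel::real measure) = bot" using trivial_limit_def by blast
    thus False by (simp add: ae_filter_eq_bot_iff)
  qed
qed

lemma G_cont: "continuous_on UNIV G"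
proof (rule continuous_onI)
  fix x and e :: real assume e: "0 < e"
  show "\<exists>d>0. \<forall>x'\<in>UNIV. dist x' x < d \<longrightarrow> dist (G x') (G x) \<le> e"
  proof (intro exI[of _ "e / (R + 1)"] conjI ballI impI)
    show "0 < e / (R + 1)" using e R_nonneg by simp
    fix x' assume "dist x' x < e / (R + 1)"
    hence d: "\<bar>x' - x\<bar> * (R+1) < e" using R_nonneg by (simp add: dist_real_def pos_less_divide_eq)
    have "\<bar>G x' - G x\<bar> \<le> R * \<bar>x' - x\<bar>"
      using G_lip[of x x'] G_lip[of x' x] G_mono[of x x'] G_mono[of x' x]
      by (cases "x \<le> x'") (auto simp: abs_if algebra_simps)
    also have "\<dots> \<le> \<bar>x' - x\<bar> * (R+1)" by (simp add: algebra_simps)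
    finally show "dist (G x') (G x) \<le> e" using d by (simp add: dist_real_def)
  qed
qed

lemma G_top: "(\<lambda>k::nat. G (real k)) \<longlonglongrightarrow> (LINT y|lborel. rho y)"
proof -
  have "(\<lambda>k::nat. integral\<^sup>L lborel (\<lambda>y. indicator {..real k} y *\<^sub>R rho y)) \<longlonglongrightarrow> integral\<^sup>L lborel rho"
  proof (rule integral_dominated_convergence[where w="\<lambda>y. \<bar>rho y\<bar>"])
    show "AE x in lborel. (\<lambda>i. indicator {..real i} x *\<^sub>R rho x) \<longlonglongrightarrow> rho x"
    proof (rule AE_I2, rule tendsto_eventually)
      fix x :: real
      obtain k :: nat where "x \<le> real k" using real_arch_simple by blast
      thus "\<forall>\<^sub>F i in sequentially. indicator {..real i} x *\<^sub>R rho x = rho x"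
        unfolding eventually_sequentially
        by (intro exI[of _ k]) (auto simp: indicator_def)
    qed
  qed (use int meas_rho in \<open>auto simp: indicator_def\<close>)
  thus ?thesis unfolding G_def set_lebesgue_integral_def .
qed

lemma G_bot: "(\<lambda>k::nat. G (- real k)) \<longlonglongrightarrow> 0"
proof -
  have "(\<lambda>k::nat. integral\<^sup>L lborel (\<lambda>y. indicator {..- real k} y *\<^sub>R rho y)) \<longlonglongrightarrow> integral\<^sup>L lborel (\<lambda>y::real. 0::real)"
  proof (rule integral_dominated_convergence[where w="\<lambda>y. \<bar>rho y\<bar>" and f="\<lambda>y::real. 0::real" and s="\<lambda>k y. indicator {..- real k} y *\<^sub>R rho y"])
    show "AE x in lborel. (\<lambda>i. indicator {..- real i} x *\<^sub>R rho x) \<longlonglongrightarrow> 0"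
    proof (rule AE_I2, rule tendsto_eventually)
      fix x :: real
      obtain k :: nat where "- x < real k" using reals_Archimedean2 by blast
      thus "\<forall>\<^sub>F i in sequentially. indicator {..- real i} x *\<^sub>R rho x = 0"
        unfolding eventually_sequentially
        by (intro exI[of _ k]) (auto simp: indicator_def)
    qed
  qed (use int meas_rho in \<open>auto simp: indicator_def\<close>)
  thus ?thesis unfolding G_def set_lebesgue_integral_def by simp
qed

end



lemma Linf_AE:
  assumes "\<exists>c. AE y in lborel. \<bar>rho y\<bar> \<le> c"
  shows "AE y in lborel. \<bar>rho y\<bar> \<le> Linf_norm rho"
proof -
  define C where "C = {c. AE y in lborel. \<bar>rho y\<bar> \<le> c}"
  have ne: "C \<noteq> {}" using assms by (auto simp: C_def)
  have lb: "0 \<le> c" if "c \<in> C" for c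
  proof (rule ccontr)
    assume "\<not> 0 \<le> c"
    have "AE y in lborel. \<bar>rho y\<bar> \<le> c" using that by (simp add: C_def)
    hence "AE y in (lborel::real measure). False"
    proof (rule eventually_mono)
      fix y assume "\<bar>rho y\<bar> \<le> c" thus False using \<open>\<not> 0 \<le> c\<close> by linarith
    qed
    hence "ae_filter (lborel::real measure) = bot" using trivial_limit_def by blast
    thus False by (simp add: ae_filter_eq_bot_iff)
  qed
  hence bdd: "bdd_below C" by (auto simp: bdd_below_def)
  have "AE y in lborel. \<bar>rho y\<bar> \<le> Inf C + 1 / real (Suc k)" for k
  proof -
    have "Inf C < Inf C + 1 / real (Suc k)" by simp
    then obtain c where "c \<in> C" "c < Inf C + 1 / real (Suc k)"
      using cInf_less_iff[OF ne bdd] by blast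
    thus ?thesis unfolding C_def by (auto elim!: eventually_mono)
  qed
  hence "AE y in lborel. \<forall>k. \<bar>rho y\<bar> \<le> Inf C + 1 / real (Suc k)"
    by (simp add: AE_all_countable)
  hence "AE y in lborel. \<bar>rho y\<bar> \<le> Inf C"
  proof (rule eventually_mono)
    fix y assume h: "\<forall>k. \<bar>rho y\<bar> \<le> Inf C + 1 / real (Suc k)"
    show "\<bar>rho y\<bar> \<le> Inf C"
    proof (rule ccontr)
      assume "\<not> \<bar>rho y\<bar> \<le> Inf C"
      then obtain k where "k > 0" "inverse (real k) < \<bar>rho y\<bar> - Inf C"
        using ex_inverse_of_nat_less[of "\<bar>rho y\<bar> - Inf C"] by auto
      moreover have "inverse (real (Suc k)) \<le> inverse (real k)" using \<open>k > 0\<close> by (simp add: le_imp_inverse_le)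
      ultimately show False using h[rule_format, of k] by (simp add: inverse_eq_divide)
    qed
  qed
  thus ?thesis by (simp add: Linf_norm_def C_def)
qed

locale meas2 = meas +
  fixes L :: real
  assumes mass: "(LINT y|lborel. rho y) = L"
    and supp: "bounded (msupp rho)"
    and L_pos: "L > 0"
begin

lemma notin_supp_deriv:
  assumes "p \<notin> msupp rho"
  shows "DERIV G p :> 0"
proof -
  obtain e where e: "e > 0" "\<not> (LINT y:{p-e..p+e}|lborel. rho y) > 0"
    using assms unfolding msupp_def by blast
  hence "(LINT y:{p-e..p+e}|lborel. rho y) = 0" using int_nonneg[of "{p-e..p+e}"] by linarith
  moreover have "(LINT y:{p-e..p+e}|lborel. rho y) = G (p+e) - G (p-e)" using G_diff[of "p-e" "p+e"] e by simp
  ultimately have eq: "G (p+e) = G (p-e)" by simp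
  have const: "G p = G y" if "y \<in> {p-e<..<p+e}" for y
  proof -
    have "G (p-e) \<le> G y" "G y \<le> G (p+e)" "G (p-e) \<le> G p" "G p \<le> G (p+e)"
      using that e by (auto intro!: G_mono)
    thus ?thesis using eq by linarith
  qed
  show ?thesis
  proof (rule has_field_derivative_transform_within_open[of "\<lambda>_. G p" 0 p "{p-e<..<p+e}"])
    show "p \<in> {p-e<..<p+e}" using e by simp
    fix y assume "y \<in> {p-e<..<p+e}" thus "G p = G y" by (rule const)
  qed auto
qed

lemma G_const_ivl:
  assumes "a < b" "\<And>p. a < p \<Longrightarrow> p < b \<Longrightarrow> p \<notin> msupp rho"
  shows "G b = G a"
proof -
  have "continuous_on {a..b} G" using continuous_on_subset[OF G_cont] by blast
  thus ?thesis using DERIV_isconst2[of a b G b] assms notin_supp_deriv by auto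
qed

lemma G_right: assumes "x \<ge> xmax rho" shows "G x = L"
proof -
  have ba: "bdd_above (msupp rho)" by (rule bounded_imp_bdd_above[OF supp])
  have nots: "p \<notin> msupp rho" if "p > xmax rho" for p
    using cSup_upper[OF _ ba, of p] that unfolding xmax_def by force
  have c: "G y = G (xmax rho)" if "y \<ge> xmax rho" for y
    using G_const_ivl[of "xmax rho" y] nots that by (cases "y = xmax rho") auto
  have "eventually (\<lambda>k. G (real k) = G (xmax rho)) sequentially"
  proof -
    obtain k0 :: nat where "xmax rho \<le> real k0" using real_arch_simple by blast
    thus ?thesis unfolding eventually_sequentially by (intro exI[of _ k0]) (auto intro!: c simp del: of_nat_le_iff)
  qed
  hence "(\<lambda>k. G (real k)) \<longlonglongrightarrow> G (xmax rho)"
    by (rule tendsto_eventually)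
  hence "G (xmax rho) = L" using LIMSEQ_unique G_top mass by metis
  thus ?thesis using c[OF assms] by simp
qed

lemma G_left: assumes "x \<le> xmin rho" shows "G x = 0"
proof -
  have bb: "bdd_below (msupp rho)" by (rule bounded_imp_bdd_below[OF supp])
  have nots: "p \<notin> msupp rho" if "p < xmin rho" for p
    using cInf_lower[OF _ bb, of p] that unfolding xmin_def by force
  have c: "G y = G (xmin rho)" if "y \<le> xmin rho" for y
    using G_const_ivl[of y "xmin rho"] nots that by (cases "y = xmin rho") auto
  have "eventually (\<lambda>k. G (- real k) = G (xmin rho)) sequentially"
  proof -
    obtain k0 :: nat where "- xmin rho \<le> real k0" using real_arch_simple by blast
    thus ?thesis unfolding eventually_sequentially by (intro exI[of _ k0]) (auto intro!: c simp del: of_nat_le_iff)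
  qed
  hence "(\<lambda>k. G (- real k)) \<longlonglongrightarrow> G (xmin rho)"
    by (rule tendsto_eventually)
  hence "G (xmin rho) = 0" using LIMSEQ_unique G_bot by metis
  thus ?thesis using c[OF assms] by simp
qed

lemma xbar_props:
  assumes "i \<le> 2 ^ n"
  shows "G (xbar rho L n i) = real i * elln L n \<and> (0 < i \<longrightarrow> xbar rho L n i \<le> xmax rho)"
  using assms
proof (induction i)
  case 0
  show ?case using G_left[of "xmin rho"] by simp
next
  case (Suc i)
  define a where "a = xbar rho L n i"
  define ell where "ell = elln L n"
  define tau where "tau = real (Suc i) * ell"
  have lpos: "ell > 0" using L_pos by (simp add: ell_def elln_def)
  have Ga: "G a = real i * ell" using Suc by (simp add: a_def ell_def)
  have tL: "tau \<le> L"
  proof -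
    have "real (Suc i) \<le> 2 ^ n" using Suc.prems by (metis of_nat_le_iff of_nat_numeral of_nat_power)
    hence "real (Suc i) * (L / 2 ^ n) \<le> 2 ^ n * (L / 2 ^ n)"
      using L_pos by (intro mult_right_mono) auto
    thus ?thesis by (simp add: tau_def ell_def elln_def)
  qed
  define S where "S = {x. (LINT y:{a..x}|lborel. rho y) < ell}"
  have S_eq: "S = {x. G x < tau}"
  proof safe
    fix x assume "x \<in> S"
    show "G x < tau"
    proof (cases "a \<le> x")
      case True thus ?thesis using \<open>x \<in> S\<close> G_diff[OF True] Ga by (simp add: S_def tau_def algebra_simps)
    next
      case False thus ?thesis using G_mono[of x a] Ga lpos by (simp add: tau_def algebra_simps)
    qed
  next
    fix x assume "G x < tau"
    show "x \<in> S"
    proof (cases "a \<le> x")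
      case True thus ?thesis using \<open>G x < tau\<close> G_diff[OF True] Ga by (simp add: S_def tau_def algebra_simps)
    next
      case False thus ?thesis using lpos by (simp add: S_def set_lebesgue_integral_def)
    qed
  qed
  have xb: "xbar rho L n (Suc i) = Sup S" by (simp add: S_def a_def ell_def)
  have ne: "S \<noteq> {}" using Ga lpos by (auto simp: S_eq tau_def intro!: exI[of _ a] simp: algebra_simps)
  have ub: "x \<le> xmax rho" if "x \<in> S" for x
    using that G_right[of x] tL by (force simp: S_eq)
  hence bdd: "bdd_above S" by (auto simp: bdd_above_def)
  have op: "open S" unfolding S_eq by (rule open_Collect_less[OF G_cont continuous_on_const])
  have notin: "Sup S \<notin> S"
  proof
    assume "Sup S \<in> S"
    then obtain e where "e > 0" "ball (Sup S) e \<subseteq> S" using op openE by blast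
    hence "Sup S + e/2 \<in> S" by (auto simp: dist_real_def)
    thus False using cSup_upper[OF _ bdd, of "Sup S + e/2"] \<open>e > 0\<close> by auto
  qed
  have "closure S \<subseteq> {x. G x \<le> tau}"
    by (rule closure_minimal) (auto simp: S_eq intro!: closed_Collect_le[OF G_cont continuous_on_const])
  hence le: "G (Sup S) \<le> tau" using closure_contains_Sup[OF ne bdd] by auto
  have "G (Sup S) = tau" using le notin by (auto simp: S_eq)
  moreover have "Sup S \<le> xmax rho" using cSup_least[OF ne] ub by blast
  ultimately show ?case unfolding xb by (simp add: tau_def ell_def)
qed

end



lemma within_to_at:
  fixes f :: "real \<Rightarrow> real"
  assumes "t > 0" "(f has_real_derivative l) (at t within {0..})"
  shows "(f has_real_derivative l) (at t)"
proof -
  have "(f has_real_derivative l) (at t within {0<..})"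
    using assms(2) by (rule DERIV_subset) auto
  thus ?thesis using at_within_open[of t "{0<..}"] assms(1) by simp
qed

lemma cont_from_deriv:
  fixes f :: "real \<Rightarrow> real"
  assumes "\<And>t. t \<ge> 0 \<Longrightarrow> \<exists>l. (f has_real_derivative l) (at t within {0..})"
  shows "continuous_on {0..T} f"
proof -
  have "continuous_on {0..} f"
    unfolding continuous_on_eq_continuous_within
    using assms DERIV_continuous by fastforce
  thus ?thesis by (rule continuous_on_subset) auto
qed

lemma barrier:
  fixes F :: "nat \<Rightarrow> real \<Rightarrow> real" and N :: nat
  assumes T: "T \<ge> 0" and cont: "\<And>k. k < N \<Longrightarrow> continuous_on {0..T} (F k)"
    and k0: "k0 < N" "c \<le> F k0 T" and init: "\<And>k. k < N \<Longrightarrow> F k 0 < c"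
    and step: "\<And>t j. 0 < t \<Longrightarrow> t \<le> T \<Longrightarrow> j < N \<Longrightarrow> c \<le> F j t \<Longrightarrow>
                  (\<forall>k<N. F k t \<le> F j t) \<Longrightarrow> \<exists>l<0. (F j has_real_derivative l) (at t)"
  shows False
proof -
  define A where "A = (\<Union>k\<in>{..<N}. {t \<in> {0..T}. (\<lambda>_. c) t \<le> F k t})"
  have cl: "closed A" unfolding A_def
    by (intro closed_UN finite_lessThan ballI continuous_on_closed_Collect_le continuous_on_const cont) auto
  have ne: "A \<noteq> {}" using k0 T by (auto simp: A_def)
  have bdd: "bdd_below A" by (auto simp: A_def bdd_below_def)
  define t1 where "t1 = Inf A"
  have t1A: "t1 \<in> A" using closed_contains_Inf[OF ne bdd cl] by (simp add: t1_def)
  then obtain k where k: "k < N" "c \<le> F k t1" "0 \<le> t1" "t1 \<le> T" by (auto simp: A_def)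
  have "t1 \<noteq> 0" using k init[of k] by auto
  hence t1pos: "t1 > 0" using k by simp
  define m where "m = Max ((\<lambda>k. F k t1) ` {..<N})"
  have "m \<in> (\<lambda>k. F k t1) ` {..<N}" unfolding m_def using k by (intro Max_in) auto
  then obtain j where j: "j < N" "F j t1 = m" by auto
  have mx: "\<forall>k'<N. F k' t1 \<le> F j t1" using j unfolding m_def by (auto intro!: Max_ge)
  have cj: "c \<le> F j t1" using mx k by force
  obtain l where l: "l < 0" "(F j has_real_derivative l) (at t1)"
    using step[OF t1pos k(4) j(1) cj mx] by blast
  obtain d where d: "d > 0" "\<And>h. h > 0 \<Longrightarrow> h < d \<Longrightarrow> F j t1 < F j (t1 - h)"
    using DERIV_neg_dec_left[OF l(2) l(1)] by blast
  define h where "h = min (d/2) (t1/2)"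
  have h: "h > 0" "h < d" "t1 - h \<ge> 0" using d t1pos by (auto simp: h_def)
  have "t1 - h \<in> A" using d(2)[OF h(1,2)] cj h k j by (auto simp: A_def intro!: bexI[of _ j])
  hence "t1 \<le> t1 - h" unfolding t1_def by (rule cInf_lower[OF _ bdd])
  thus False using h by simp
qed

locale ftl =
  fixes v v' :: "real \<Rightarrow> real" and vmax ell :: real and N :: nat and X :: "nat \<Rightarrow> real \<Rightarrow> real"
  assumes vd: "\<And>r. r \<ge> 0 \<Longrightarrow> (v has_real_derivative v' r) (at r within {0..})"
    and vdec: "\<And>a b. 0 \<le> a \<Longrightarrow> a < b \<Longrightarrow> v b < v a"
    and v0: "v 0 = vmax"
    and V3: "\<And>a b. 0 \<le> a \<Longrightarrow> a \<le> b \<Longrightarrow> b * v' b \<le> a * v' a"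
    and ellpos: "ell > 0"
    and ord: "\<And>t i. t \<ge> 0 \<Longrightarrow> i < N \<Longrightarrow> X i t < X (Suc i) t"
    and dN: "\<And>t. t \<ge> 0 \<Longrightarrow> (X N has_real_derivative vmax) (at t within {0..})"
    and di: "\<And>t i. t \<ge> 0 \<Longrightarrow> i < N \<Longrightarrow>
        (X i has_real_derivative v (ell / (X (Suc i) t - X i t))) (at t within {0..})"
begin

definition D where "D i t = X (Suc i) t - X i t"
definition Y where "Y i t = ell / D i t"
definition W where "W i t = (if i < N then v (Y i t) else vmax)"
definition dW where "dW i t = (if i < N then v' (Y i t) * (- (ell * (W (Suc i) t - W i t)) / (D i t * D i t)) else 0)"

lemma Dpos: "t \<ge> 0 \<Longrightarrow> i < N \<Longrightarrow> D i t > 0"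
  using ord by (simp add: D_def)

lemma Ypos: "t \<ge> 0 \<Longrightarrow> i < N \<Longrightarrow> Y i t > 0"
  using Dpos ellpos by (simp add: Y_def)

lemma vmono: "0 \<le> a \<Longrightarrow> a \<le> b \<Longrightarrow> v b \<le> v a"
  using vdec by (cases "a = b") (auto simp: le_less)

lemma vle: "0 \<le> a \<Longrightarrow> v a \<le> vmax"
  using vmono[of 0 a] v0 by simp

lemma v'_nonpos: assumes "r > 0" shows "v' r \<le> 0"
proof (rule ccontr)
  assume "\<not> v' r \<le> 0"
  have "DERIV v r :> v' r" using within_to_at[OF assms vd] assms by simp
  then obtain d where "d > 0" "\<And>h. h > 0 \<Longrightarrow> h < d \<Longrightarrow> v r < v (r + h)"
    using DERIV_pos_inc_right \<open>\<not> v' r \<le> 0\<close> by (metis not_le)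
  hence "v r < v (r + d/2)" by simp
  moreover have "v (r + d/2) < v r" using vdec[of r "r + d/2"] assms \<open>d > 0\<close> by simp
  ultimately show False by simp
qed

lemma dX: "t \<ge> 0 \<Longrightarrow> i \<le> N \<Longrightarrow> (X i has_real_derivative W i t) (at t within {0..})"
  using di dN by (cases "i = N") (auto simp: W_def Y_def D_def)

lemma dD: "t \<ge> 0 \<Longrightarrow> i < N \<Longrightarrow> (D i has_real_derivative W (Suc i) t - W i t) (at t within {0..})"
  unfolding D_def[abs_def] by (intro DERIV_diff dX) auto

lemma dWl: assumes "t \<ge> 0" "i \<le> N" shows "(W i has_real_derivative dW i t) (at t within {0..})"
proof (cases "i = N")
  case True
  have "W i = (\<lambda>_. vmax)" using True by (auto simp: W_def)
  thus ?thesis using True by (simp add: dW_def)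
next
  case False
  hence iN: "i < N" using assms by simp
  have eq: "W i = (\<lambda>t. v (ell / D i t))" using iN by (auto simp: W_def Y_def)
  have dY: "((\<lambda>t. ell / D i t) has_real_derivative (0 * D i t - ell * (W (Suc i) t - W i t)) / (D i t * D i t)) (at t within {0..})"
    by (rule DERIV_divide[OF DERIV_const dD[OF assms(1) iN]]) (use Dpos[OF assms(1) iN] in simp)
  have dv: "DERIV v (ell / D i t) :> v' (ell / D i t)"
    using within_to_at[of "ell / D i t" v] vd[of "ell / D i t"] Ypos[OF assms(1) iN] by (simp add: Y_def)
  show ?thesis unfolding eq using DERIV_chain2[OF dv dY] iN by (simp add: dW_def Y_def)
qed

lemma D_lower:
  assumes mu: "mu > 0" and init: "\<And>i. i < N \<Longrightarrow> mu \<le> D i 0"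
    and t: "t \<ge> 0" and i: "i < N"
  shows "mu \<le> D i t"
proof (rule ccontr)
  assume "\<not> mu \<le> D i t"
  define eps where "eps = (mu - D i t) / (2 * (1 + t))"
  have eps: "eps > 0" using \<open>\<not> mu \<le> D i t\<close> t by (simp add: eps_def)
  have epsT: "eps * (1 + t) = (mu - D i t) / 2" using t by (simp add: eps_def field_simps)
  define F where "F k s = - (D k s + eps * (1 + s))" for k s
  show False
  proof (rule barrier[of t N F i "- mu"])
    show "0 \<le> t" by fact
    show "i < N" by fact
    fix k assume k: "k < N"
    have "(F k has_real_derivative - ((W (Suc k) s - W k s) + eps)) (at s within {0..})" if "s \<ge> 0" for s
      unfolding F_def[abs_def]
      by (rule derivative_eq_intros dD[OF that k] DERIV_const | simp)+
    thus "continuous_on {0..t} (F k)" by (intro cont_from_deriv) auto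
    show "F k 0 < - mu" using init[OF k] eps by (simp add: F_def)
  next
    have "D i t + eps * (1 + t) \<le> mu" unfolding epsT using \<open>\<not> mu \<le> D i t\<close> by (simp add: field_simps)
    thus "- mu \<le> F i t" unfolding F_def by simp
  next
    fix s j assume s: "0 < s" "s \<le> t" and j: "j < N" and cj: "- mu \<le> F j s" and mx: "\<forall>k<N. F k s \<le> F j s"
    have dF: "(F j has_real_derivative - ((W (Suc j) s - W j s) + eps)) (at s within {0..})"
      unfolding F_def[abs_def]
      by (rule derivative_eq_intros dD[OF _ j] DERIV_const | use s in simp)+
    have "W j s \<le> W (Suc j) s"
    proof (cases "Suc j < N")
      case True
      have "F (Suc j) s \<le> F j s" using mx True by blast
      hence "D j s \<le> D (Suc j) s" by (simp add: F_def)
      hence "Y (Suc j) s \<le> Y j s" unfolding Y_def using Dpos[of s j] s j ellpos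
        by (intro divide_left_mono) auto
      thus ?thesis using vmono[of "Y (Suc j) s" "Y j s"] Ypos[of s "Suc j"] True j s by (simp add: W_def)
    next
      case False
      thus ?thesis using vle[of "Y j s"] Ypos[of s j] j s by (simp add: W_def)
    qed
    thus "\<exists>l<0. (F j has_real_derivative l) (at s)"
      using within_to_at[OF s(1) dF] eps by (intro exI[of _ "- ((W (Suc j) s - W j s) + eps)"]) auto
  qed
qed

lemma dW_eq: assumes "t \<ge> 0" "i < N"
  shows "dW i t = (- (Y i t * v' (Y i t))) * ((W (Suc i) t - W i t) / D i t)"
  using Dpos[OF assms] assms(2) by (simp add: dW_def Y_def field_simps)

lemma h_nonneg: assumes "t \<ge> 0" "i < N" shows "0 \<le> - (Y i t * v' (Y i t))"
  using v'_nonpos[OF Ypos[OF assms]] Ypos[OF assms] by (simp add: mult_nonneg_nonpos)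

lemma oleinik:
  assumes T: "T > 0" and j0: "j0 < N"
  shows "T * ((W (Suc j0) T - W j0 T) / D j0 T) \<le> 1"
proof (rule ccontr)
  assume contra: "\<not> ?thesis"
  define F where "F k s = s * ((W (Suc k) s - W k s) / D k s)" for k s
  define dF where "dF k s = s * (((dW (Suc k) s - dW k s) * D k s - (W (Suc k) s - W k s) * (W (Suc k) s - W k s)) / (D k s * D k s))
      + 1 * ((W (Suc k) s - W k s) / D k s)" for k s
  have deriv: "(F k has_real_derivative dF k s) (at s within {0..})" if "s \<ge> 0" "k < N" for k s
  proof -
    have da: "((\<lambda>s. W (Suc k) s - W k s) has_real_derivative dW (Suc k) s - dW k s) (at s within {0..})"
      using that by (intro DERIV_diff dWl) auto
    have q: "((\<lambda>s. (W (Suc k) s - W k s) / D k s) has_real_derivative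
        ((dW (Suc k) s - dW k s) * D k s - (W (Suc k) s - W k s) * (W (Suc k) s - W k s)) / (D k s * D k s)) (at s within {0..})"
      by (rule DERIV_divide[OF da dD[OF that]]) (use Dpos[OF that] in simp)
    show ?thesis unfolding F_def[abs_def] dF_def using DERIV_mult'[OF DERIV_ident q] by simp
  qed
  show False
  proof (rule barrier[of T N F j0 "F j0 T"])
    show "0 \<le> T" using T by simp
    show "j0 < N" by fact
    show "F j0 T \<le> F j0 T" by simp
    fix k assume k: "k < N"
    show "continuous_on {0..T} (F k)" using deriv k by (intro cont_from_deriv) blast
    show "F k 0 < F j0 T" using contra by (simp add: F_def)
  next
    fix s j assume s: "0 < s" "s \<le> T" and j: "j < N" and cj: "F j0 T \<le> F j s" and mx: "\<forall>k<N. F k s \<le> F j s"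
    have s0: "s \<ge> 0" using s by simp
    define a where "a = W (Suc j) s - W j s"
    define Dj where "Dj = D j s"
    define b where "b = a / Dj"
    define hj where "hj = - (Y j s * v' (Y j s))"
    have Djpos: "Dj > 0" using Dpos[OF s0 j] by (simp add: Dj_def)
    have sb: "s * b > 1" using cj contra by (simp add: F_def a_def Dj_def b_def)
    have bpos: "b > 0"
    proof (rule ccontr)
      assume "\<not> b > 0" hence "s * b \<le> 0" using s by (simp add: mult_nonneg_nonpos)
      thus False using sb by simp
    qed
    hence apos: "a > 0" using Djpos by (simp add: b_def zero_less_divide_iff)
    have hj0: "0 \<le> hj" using h_nonneg[OF s0 j] by (simp add: hj_def)
    have dWj: "dW j s = hj * b" using dW_eq[OF s0 j] by (simp add: hj_def b_def a_def Dj_def)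
    have dW1: "dW (Suc j) s \<le> hj * b"
    proof (cases "Suc j < N")
      case True
      define b1 where "b1 = (W (Suc (Suc j)) s - W (Suc j) s) / D (Suc j) s"
      define h1 where "h1 = - (Y (Suc j) s * v' (Y (Suc j) s))"
      have e1: "dW (Suc j) s = h1 * b1" using dW_eq[OF s0 True] by (simp add: h1_def b1_def)
      have h10: "0 \<le> h1" using h_nonneg[OF s0 True] by (simp add: h1_def)
      have "s * b1 \<le> s * b" using mx True by (simp add: F_def b1_def b_def a_def Dj_def)
      hence b1b: "b1 \<le> b" using s by simp
      have Yle: "Y (Suc j) s \<le> Y j s"
      proof (rule ccontr)
        assume "\<not> Y (Suc j) s \<le> Y j s"
        hence "v (Y (Suc j) s) \<le> v (Y j s)" using vmono[of "Y j s" "Y (Suc j) s"] Ypos[OF s0 j] by simp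
        thus False using apos True j by (simp add: a_def W_def)
      qed
      have "h1 \<le> hj" using V3[OF _ Yle] Ypos[OF s0 True] by (simp add: h1_def hj_def)
      have "h1 * b1 \<le> h1 * b" using b1b h10 by (rule mult_left_mono)
      also have "\<dots> \<le> hj * b" using \<open>h1 \<le> hj\<close> bpos by (simp add: mult_right_mono)
      finally show ?thesis using e1 by simp
    next
      case False
      thus ?thesis using hj0 bpos by (simp add: dW_def)
    qed
    have da: "dW (Suc j) s - dW j s \<le> 0" using dW1 dWj by simp
    have eq: "dF j s = s * ((dW (Suc j) s - dW j s) / Dj) + b * (1 - s * b)"
      unfolding dF_def using Djpos by (simp add: a_def[symmetric] Dj_def[symmetric] b_def field_simps)
    have p1: "s * ((dW (Suc j) s - dW j s) / Dj) \<le> 0"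
      using s da Djpos by (intro mult_nonneg_nonpos divide_nonpos_pos) auto
    have p2: "b * (1 - s * b) < 0" using bpos sb by (intro mult_pos_neg) auto
    have "dF j s < 0" using eq p1 p2 by linarith
    thus "\<exists>l<0. (F j has_real_derivative l) (at s)"
      using within_to_at[OF s(1) deriv[OF s0 j]] by blast
  qed
qed

lemma XN_bound: assumes "t \<ge> 0" shows "X N t \<le> X N 0 + vmax * t"
proof -
  have d: "((\<lambda>s. X N 0 + vmax * s - X N s) has_real_derivative (0 + vmax * 1) - W N s) (at s within {0..})" if "s \<ge> 0" for s
    by (intro DERIV_diff DERIV_add DERIV_const DERIV_cmult DERIV_ident dX that) auto
  have "(\<lambda>s. X N 0 + vmax * s - X N s) 0 \<le> (\<lambda>s. X N 0 + vmax * s - X N s) t"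
  proof (rule DERIV_nonneg_imp_increasing_open[OF assms])
    fix s assume "0 < s" "s < t"
    thus "\<exists>y. ((\<lambda>s. X N 0 + vmax * s - X N s) has_real_derivative y) (at s) \<and> 0 \<le> y"
      using within_to_at[OF _ d, of s] by (intro exI[of _ "(0 + vmax * 1) - W N s"]) (simp add: W_def)
  next
    show "continuous_on {0..t} (\<lambda>s. X N 0 + vmax * s - X N s)"
      using d by (intro cont_from_deriv) blast
  qed
  thus ?thesis by simp
qed

lemma X0_bound: assumes "t \<ge> 0" "0 < N" "\<And>s. s \<ge> 0 \<Longrightarrow> m \<le> W 0 s"
  shows "X 0 0 + m * t \<le> X 0 t"
proof -
  have d: "((\<lambda>s. X 0 s - m * s) has_real_derivative W 0 s - m * 1) (at s within {0..})" if "s \<ge> 0" for s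
    by (intro DERIV_diff DERIV_cmult DERIV_ident dX that) simp
  have "(\<lambda>s. X 0 s - m * s) 0 \<le> (\<lambda>s. X 0 s - m * s) t"
  proof (rule DERIV_nonneg_imp_increasing_open[OF assms(1)])
    fix s assume "0 < s" "s < t"
    thus "\<exists>y. ((\<lambda>s. X 0 s - m * s) has_real_derivative y) (at s) \<and> 0 \<le> y"
      using within_to_at[OF _ d, of s] assms(3)[of s] by (intro exI[of _ "W 0 s - m * 1"]) simp
  next
    show "continuous_on {0..t} (\<lambda>s. X 0 s - m * s)"
      using d by (intro cont_from_deriv) blast
  qed
  thus ?thesis by simp
qed

end



lemma tele_abs:
  fixes c :: "nat \<Rightarrow> real"
  assumes "a \<le> b" shows "\<bar>c b - c a\<bar> \<le> (\<Sum>j\<in>{a..<b}. \<bar>c (Suc j) - c j\<bar>)"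
  using assms
proof (induction b rule: dec_induct)
  case base thus ?case by simp
next
  case (step b)
  have "\<bar>c (Suc b) - c a\<bar> \<le> \<bar>c b - c a\<bar> + \<bar>c (Suc b) - c b\<bar>" by linarith
  also have "\<dots> \<le> (\<Sum>j\<in>{a..<b}. \<bar>c (Suc j) - c j\<bar>) + \<bar>c (Suc b) - c b\<bar>" using step.IH by simp
  also have "\<dots> = (\<Sum>j\<in>{a..<Suc b}. \<bar>c (Suc j) - c j\<bar>)" using step.hyps by simp
  finally show ?case .
qed

lemma sum_concat_ivl:
  fixes J :: "nat \<Rightarrow> nat" and d :: "nat \<Rightarrow> real"
  assumes "\<And>k. k < m \<Longrightarrow> J k \<le> J (Suc k)"
  shows "(\<Sum>k<m. \<Sum>j\<in>{J k..<J (Suc k)}. d j) = (\<Sum>j\<in>{J 0..<J m}. d j) \<and> J 0 \<le> J m"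
  using assms
proof (induction m)
  case 0 thus ?case by simp
next
  case (Suc m)
  hence IH: "(\<Sum>k<m. \<Sum>j\<in>{J k..<J (Suc k)}. d j) = (\<Sum>j\<in>{J 0..<J m}. d j)" "J 0 \<le> J m" by auto
  have "J m \<le> J (Suc m)" using Suc.prems by simp
  thus ?case using IH by (simp add: sum.atLeastLessThan_concat)
qed

lemma TV_step:
  fixes f :: "real \<Rightarrow> real" and p c :: "nat \<Rightarrow> real" and N :: nat
  assumes mono: "\<And>k. k < N \<Longrightarrow> p k < p (Suc k)"
    and left: "\<And>z. z < p 0 \<Longrightarrow> f z = c 0"
    and mid: "\<And>k z. k < N \<Longrightarrow> p k \<le> z \<Longrightarrow> z < p (Suc k) \<Longrightarrow> f z = c (Suc k)"
    and right: "\<And>z. p N \<le> z \<Longrightarrow> f z = c (Suc N)"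
  shows "TV f = ereal (\<Sum>k<Suc N. \<bar>c (Suc k) - c k\<bar>)"
proof -
  define S where "S = (\<Sum>k<Suc N. \<bar>c (Suc k) - c k\<bar>)"
  have pmono: "p i \<le> p j" if "i \<le> j" "j \<le> N" for i j
    using that
  proof (induction j rule: dec_induct)
    case base thus ?case by simp
  next
    case (step j) thus ?case using mono[of j] by simp
  qed
  define J where "J z = card {k. k \<le> N \<and> p k \<le> z}" for z
  have fJ: "f z = c (J z) \<and> J z \<le> Suc N" for z
  proof (cases "z < p 0")
    case True
    have e: "{k. k \<le> N \<and> p k \<le> z} = {}" using True pmono[of 0] by force
    show ?thesis using left[OF True] unfolding J_def e by simp
  next
    case False
    define K where "K = Max {k. k \<le> N \<and> p k \<le> z}"
    have fin: "finite {k. k \<le> N \<and> p k \<le> z}" by simp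
    have ne: "0 \<in> {k. k \<le> N \<and> p k \<le> z}" using False by simp
    have Kin: "K \<le> N" "p K \<le> z" using Max_in[OF fin] ne unfolding K_def by blast+
    have Kmax: "k \<le> K" if "k \<le> N" "p k \<le> z" for k using Max_ge[OF fin] that unfolding K_def by blast
    have set: "{k. k \<le> N \<and> p k \<le> z} = {..K}"
      using Kin Kmax pmono by (auto intro: order_trans)
    hence JK: "J z = Suc K" by (simp add: J_def)
    show ?thesis
    proof (cases "K < N")
      case True
      have "\<not> p (Suc K) \<le> z" using Kmax[of "Suc K"] True by auto
      thus ?thesis using mid[OF True Kin(2)] JK True by simp
    next
      case False
      hence "K = N" using Kin by simp
      thus ?thesis using right Kin JK by simp
    qed
  qed
  have Jmono: "J a \<le> J b" if "a \<le> b" for a b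
    unfolding J_def by (rule card_mono) (use that in auto)
  have upper: "ereal (\<Sum>k<fst q. \<bar>f (snd q (Suc k)) - f (snd q k)\<bar>) \<le> ereal S"
    if q: "q \<in> {(m::nat, s::nat \<Rightarrow> real). \<forall>k<m. s k \<le> s (Suc k)}" for q
  proof -
    obtain m s where qq: "q = (m, s)" by (cases q)
    have sorted: "\<And>k. k < m \<Longrightarrow> s k \<le> s (Suc k)" using q qq by auto
    define d where "d j = \<bar>c (Suc j) - c j\<bar>" for j
    have "(\<Sum>k<m. \<bar>f (s (Suc k)) - f (s k)\<bar>) \<le> (\<Sum>k<m. \<Sum>j\<in>{J (s k)..<J (s (Suc k))}. d j)"
    proof (rule sum_mono)
      fix k assume "k \<in> {..<m}"
      hence "J (s k) \<le> J (s (Suc k))" using sorted Jmono by simp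
      thus "\<bar>f (s (Suc k)) - f (s k)\<bar> \<le> (\<Sum>j\<in>{J (s k)..<J (s (Suc k))}. d j)"
        using tele_abs[of "J (s k)" "J (s (Suc k))" c] fJ by (simp add: d_def)
    qed
    also have "\<dots> = (\<Sum>j\<in>{J (s 0)..<J (s m)}. d j)"
      using sum_concat_ivl[of m "\<lambda>k. J (s k)" d] sorted Jmono by simp
    also have "\<dots> \<le> (\<Sum>j\<in>{..<Suc N}. d j)"
      using fJ[of "s m"] by (intro sum_mono2) (auto simp: d_def)
    finally show ?thesis by (simp add: qq S_def d_def)
  qed
  define s0 where "s0 k = (if k = 0 then p 0 - 1 else p (k - 1))" for k
  have fs0: "f (s0 k) = c k" if "k \<le> Suc N" for k
  proof (cases k)
    case 0 thus ?thesis using left by (simp add: s0_def)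
  next
    case (Suc k')
    show ?thesis
    proof (cases "k' < N")
      case True thus ?thesis using mid[OF True] mono[OF True] Suc by (simp add: s0_def)
    next
      case False hence "k' = N" using that Suc by simp
      thus ?thesis using right Suc by (simp add: s0_def)
    qed
  qed
  have q0: "(Suc N, s0) \<in> {(m::nat, s::nat \<Rightarrow> real). \<forall>k<m. s k \<le> s (Suc k)}"
    using pmono by (auto simp: s0_def)
  have "ereal S = ereal (\<Sum>k<fst (Suc N, s0). \<bar>f (snd (Suc N, s0) (Suc k)) - f (snd (Suc N, s0) k)\<bar>)"
    using fs0 by (simp add: S_def)
  also have "\<dots> \<le> TV f" unfolding TV_def by (rule SUP_upper[OF q0])
  finally have "ereal S \<le> TV f" .
  moreover have "TV f \<le> ereal S" unfolding TV_def by (rule SUP_least) (use upper in blast)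
  ultimately show ?thesis by (simp add: S_def)
qed




lemma pmono_gen:
  fixes p :: "nat \<Rightarrow> real"
  assumes mono: "\<And>k. k < N \<Longrightarrow> p k < p (Suc k)" and "i \<le> j" "j \<le> N"
  shows "p i \<le> p j"
  using assms(2,3)
proof (induction j rule: dec_induct)
  case base thus ?case by simp
next
  case (step j) thus ?case using mono[of j] by simp
qed

lemma step_sum:
  fixes p g :: "nat \<Rightarrow> real"
  assumes mono: "\<And>k. k < N \<Longrightarrow> p k < p (Suc k)"
  shows "z < p 0 \<Longrightarrow> (\<Sum>i<N. g i * indicator {p i..<p (Suc i)} z) = 0"
    and "p N \<le> z \<Longrightarrow> (\<Sum>i<N. g i * indicator {p i..<p (Suc i)} z) = 0"
    and "k < N \<Longrightarrow> p k \<le> z \<Longrightarrow> z < p (Suc k) \<Longrightarrow> (\<Sum>i<N. g i * indicator {p i..<p (Suc i)} z) = g k"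
proof -
  have pm: "\<And>i j. i \<le> j \<Longrightarrow> j \<le> N \<Longrightarrow> p i \<le> p j" using pmono_gen[of N p] mono by blast
  assume "z < p 0"
  thus "(\<Sum>i<N. g i * indicator {p i..<p (Suc i)} z) = 0"
  proof (intro sum.neutral ballI)
    fix i assume "i \<in> {..<N}" hence "p 0 \<le> p i" using pm by simp
    thus "g i * indicator {p i..<p (Suc i)} z = 0" using \<open>z < p 0\<close> by (simp add: indicator_def)
  qed
next
  have pm: "\<And>i j. i \<le> j \<Longrightarrow> j \<le> N \<Longrightarrow> p i \<le> p j" using pmono_gen[of N p] mono by blast
  assume "p N \<le> z"
  thus "(\<Sum>i<N. g i * indicator {p i..<p (Suc i)} z) = 0"
  proof (intro sum.neutral ballI)
    fix i assume "i \<in> {..<N}" hence "p (Suc i) \<le> p N" using pm by simp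
    thus "g i * indicator {p i..<p (Suc i)} z = 0" using \<open>p N \<le> z\<close> by (simp add: indicator_def)
  qed
next
  have pm: "\<And>i j. i \<le> j \<Longrightarrow> j \<le> N \<Longrightarrow> p i \<le> p j" using pmono_gen[of N p] mono by blast
  assume k: "k < N" "p k \<le> z" "z < p (Suc k)"
  have "(\<Sum>i<N. g i * indicator {p i..<p (Suc i)} z) = (\<Sum>i<N. if i = k then g k else 0)"
  proof (rule sum.cong)
    fix i assume i: "i \<in> {..<N}"
    show "g i * indicator {p i..<p (Suc i)} z = (if i = k then g k else 0)"
    proof (cases "i = k")
      case True thus ?thesis using k by (simp add: indicator_def)
    next
      case False
      show ?thesis
      proof (cases "i < k")
        case True
        hence "p (Suc i) \<le> p k" using pm[of "Suc i" k] k by simp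
        thus ?thesis using k False by (simp add: indicator_def)
      next
        case ik: False
        hence "p (Suc k) \<le> p i" using pm[of "Suc k" i] k i False by simp
        thus ?thesis using k False by (simp add: indicator_def)
      qed
    qed
  qed simp
  also have "\<dots> = g k" using k by simp
  finally show "(\<Sum>i<N. g i * indicator {p i..<p (Suc i)} z) = g k" .
qed

lemma step_cases:
  fixes p :: "nat \<Rightarrow> real"
  assumes mono: "\<And>k. k < N \<Longrightarrow> p k < p (Suc k)"
  shows "z < p 0 \<or> p N \<le> z \<or> (\<exists>k<N. p k \<le> z \<and> z < p (Suc k))"
proof (cases "z < p 0 \<or> p N \<le> z")
  case True thus ?thesis by blast
next
  case False
  define K where "K = Max {k. k \<le> N \<and> p k \<le> z}"
  have fin: "finite {k. k \<le> N \<and> p k \<le> z}" by simp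
  have ne: "0 \<in> {k. k \<le> N \<and> p k \<le> z}" using False by simp
  have Kin: "K \<le> N" "p K \<le> z" using Max_in[OF fin] ne unfolding K_def by blast+
  have Kmax: "k \<le> K" if "k \<le> N" "p k \<le> z" for k using Max_ge[OF fin] that unfolding K_def by blast
  have "K < N" using Kin False by (cases "K = N") auto
  moreover have "z < p (Suc K)" using Kmax[of "Suc K"] \<open>K < N\<close> by force
  ultimately show ?thesis using Kin by blast
qed


declare xbar.simps(2)[simp del]

theorem proposition3p11:
  fixes v v' :: "real \<Rightarrow> real" and vmax L \<delta> :: real
    and rho :: "real \<Rightarrow> real" and x :: "nat \<Rightarrow> nat \<Rightarrow> real \<Rightarrow> real"
  assumes V1_deriv: "\<And>r. r \<ge> 0 \<Longrightarrow> (v has_real_derivative v' r) (at r within {0..})"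
    and V1_cont: "continuous_on {0..} v'"
    and V1_decr: "\<And>a b. 0 \<le> a \<Longrightarrow> a < b \<Longrightarrow> v b < v a"
    and V2: "v 0 = vmax"
    and V3: "\<And>a b. 0 \<le> a \<Longrightarrow> a \<le> b \<Longrightarrow> b * v' b \<le> a * v' a"
    and L_pos: "L > 0"
    and In_nonneg: "AE y in lborel. rho y \<ge> 0"
    and In_int: "integrable lborel rho"
    and In_mass: "(LINT y|lborel. rho y) = L"
    and In_supp: "bounded (msupp rho)"
    and In_Linf: "\<exists>c. AE y in lborel. \<bar>rho y\<bar> \<le> c"
    and sol: "\<And>n. FTL_solution v vmax rho L x n"
    and delta_pos: "\<delta> > 0"
  shows "\<forall>n::nat. \<forall>t\<ge>\<delta>.
     TV (\<lambda>z. v (rho_hat L x n t z)) = TV (\<lambda>z. v (rho_check L x n t z)) \<and>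
     TV (\<lambda>z. v (rho_hat L x n t z))
        \<le> ereal (3 * (vmax - v (Linf_norm rho)) + 2 * (xmax rho - xmin rho) / \<delta>) \<and>
     (\<forall>z. v (Linf_norm rho) \<le> v (rho_hat L x n t z) \<and> v (rho_hat L x n t z) \<le> vmax) \<and>
     (\<forall>z. v (Linf_norm rho) \<le> v (rho_check L x n t z) \<and> v (rho_check L x n t z) \<le> vmax)"
proof (intro allI impI)
  fix n :: nat and t :: real
  assume tdelta: "\<delta> \<le> t"
  have t0: "t > 0" using delta_pos tdelta by linarith
  define N where "N = Nn n"
  define ell where "ell = elln L n"
  define R where "R = Linf_norm rho"
  have ellpos: "ell > 0" using L_pos by (simp add: ell_def elln_def)
  have Npos: "N > 0" by (simp add: N_def Nn_def)
  have S: "FTL_solution v vmax rho L x n" by (rule sol)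
  interpret F: ftl v v' vmax ell N "x n"
  proof unfold_locales
    show "\<And>r. r \<ge> 0 \<Longrightarrow> (v has_real_derivative v' r) (at r within {0..})" by (rule V1_deriv)
    show "\<And>a b. 0 \<le> a \<Longrightarrow> a < b \<Longrightarrow> v b < v a" by (rule V1_decr)
    show "v 0 = vmax" by (rule V2)
    show "\<And>a b. 0 \<le> a \<Longrightarrow> a \<le> b \<Longrightarrow> b * v' b \<le> a * v' a" by (rule V3)
    show "ell > 0" by (rule ellpos)
    show "\<And>t i. t \<ge> 0 \<Longrightarrow> i < N \<Longrightarrow> x n i t < x n (Suc i) t"
      using S by (simp add: FTL_solution_def N_def)
    show "\<And>t. t \<ge> 0 \<Longrightarrow> (x n N has_real_derivative vmax) (at t within {0..})"
      using S by (simp add: FTL_solution_def N_def)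
    show "\<And>t i. t \<ge> 0 \<Longrightarrow> i < N \<Longrightarrow>
        (x n i has_real_derivative v (ell / (x n (Suc i) t - x n i t))) (at t within {0..})"
      using S by (simp add: FTL_solution_def N_def ydisc_def ell_def)
  qed
  have bndR: "AE y in lborel. \<bar>rho y\<bar> \<le> R" unfolding R_def by (rule Linf_AE[OF In_Linf])
  interpret M: meas2 rho R L
    by unfold_locales (rule In_int In_nonneg bndR In_mass In_supp L_pos)+
  have x0: "x n i 0 = xbar rho L n i" if "i \<le> N" for i
    using S that by (simp add: FTL_solution_def N_def)
  have xbG: "M.G (xbar rho L n i) = real i * ell" if "i \<le> N" for i
    using M.xbar_props[of i n] that by (simp add: N_def Nn_def ell_def)
  have xbN: "xbar rho L n N \<le> xmax rho"
    using M.xbar_props[of N n] Npos by (simp add: N_def Nn_def)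
  have Dinit: "ell \<le> R * F.D i 0" if i: "i < N" for i
  proof -
    have D0: "F.D i 0 = xbar rho L n (Suc i) - xbar rho L n i"
      using x0[of i] x0[of "Suc i"] i by (simp add: F.D_def)
    have Dp: "F.D i 0 > 0" using F.Dpos[of 0 i] i by simp
    have "(LINT y:{xbar rho L n i..xbar rho L n (Suc i)}|lborel. rho y) = ell"
      using M.G_diff[of "xbar rho L n i" "xbar rho L n (Suc i)"] Dp D0 xbG[of i] xbG[of "Suc i"] i
      by (simp add: algebra_simps)
    moreover have "(LINT y:{xbar rho L n i..xbar rho L n (Suc i)}|lborel. rho y) \<le> R * F.D i 0"
      using M.int_le[of "xbar rho L n i" "xbar rho L n (Suc i)"] Dp D0 by simp
    ultimately show ?thesis by simp
  qed
  have Rpos: "R > 0"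
  proof -
    have "ell \<le> R * F.D 0 0" using Dinit Npos by simp
    moreover have "F.D 0 0 > 0" using F.Dpos[of 0 0] Npos by simp
    ultimately show ?thesis using ellpos
    proof -
      assume a: "ell \<le> R * F.D 0 0" "F.D 0 0 > 0" "ell > 0"
      show ?thesis
      proof (rule ccontr)
        assume "\<not> R > 0" hence "R * F.D 0 0 \<le> 0" using a(2) by (simp add: mult_nonpos_nonneg)
        thus False using a by linarith
      qed
    qed
  qed
  have Dlow: "ell / R \<le> F.D i s" if "s \<ge> 0" "i < N" for i s
  proof (rule F.D_lower[OF _ _ that])
    show "ell / R > 0" using ellpos Rpos by simp
    fix k assume "k < N"
    thus "ell / R \<le> F.D k 0" using Dinit[of k] Rpos by (simp add: pos_divide_le_eq mult.commute)
  qed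
  have Yb: "F.Y i s \<le> R" if "s \<ge> 0" "i < N" for i s
  proof -
    have "ell \<le> R * F.D i s" using Dlow[OF that] Rpos by (simp add: pos_divide_le_eq mult.commute)
    thus ?thesis using F.Dpos[OF that] by (simp add: F.Y_def pos_divide_le_eq mult.commute)
  qed
  have Wlow: "v R \<le> F.W i s" if "s \<ge> 0" "i < N" for i s
    using F.vmono[of "F.Y i s" R] Yb[OF that] F.Ypos[OF that] that by (simp add: F.W_def)
  have Wup: "F.W i s \<le> vmax" if "s \<ge> 0" for i s
  proof (cases "i < N")
    case True thus ?thesis using F.vle[OF less_imp_le[OF F.Ypos[OF that True]]] by (simp add: F.W_def)
  qed (simp add: F.W_def)
  have vR: "v R \<le> vmax" using F.vle[of R] Rpos by simp
  define p where "p k = x n k t" for k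
  define q where "q k = real k * ell" for k
  have pm: "p k < p (Suc k)" if "k < N" for k using F.ord[of t k] t0 that by (simp add: p_def)
  have qm: "q k < q (Suc k)" if "k < N" for k using ellpos by (simp add: q_def)
  have yd: "ydisc L x n i t = F.Y i t" for i
  proof -
    have "ydisc L x n i t = ell / (x n (Suc i) t - x n i t)" by (simp add: ydisc_def ell_def)
    also have "\<dots> = F.Y i t" by (simp add: F.Y_def F.D_def)
    finally show ?thesis .
  qed
  have hat: "rho_hat L x n t z = (\<Sum>i<N. F.Y i t * indicator {p i..<p (Suc i)} z)" for z
    by (simp add: rho_hat_def yd N_def p_def)
  have chk: "rho_check L x n t z = (\<Sum>i<N. F.Y i t * indicator {q i..<q (Suc i)} z)" for z
    by (simp add: rho_check_def yd N_def q_def ell_def)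
  define c where "c k = (if k = 0 then vmax else F.W (k - 1) t)" for k
  have WN: "F.W N t = vmax" by (simp add: F.W_def)
  have TVgen: "TV (\<lambda>z. v (\<Sum>i<N. F.Y i t * indicator {r i..<r (Suc i)} z)) = ereal (\<Sum>k<Suc N. \<bar>c (Suc k) - c k\<bar>)"
    if rm: "\<And>k. k < N \<Longrightarrow> r k < r (Suc k)" for r :: "nat \<Rightarrow> real"
  proof (rule TV_step[of N r, OF rm])
    fix z assume "z < r 0"
    thus "v (\<Sum>i<N. F.Y i t * indicator {r i..<r (Suc i)} z) = c 0"
      using step_sum(1)[of N r z, OF rm, simplified] V2 by (simp add: c_def)
  next
    fix k z assume "k < N" "r k \<le> z" "z < r (Suc k)"
    thus "v (\<Sum>i<N. F.Y i t * indicator {r i..<r (Suc i)} z) = c (Suc k)"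
      using step_sum(3)[of N r k z, OF rm, simplified] by (simp add: c_def F.W_def)
  next
    fix z assume "r N \<le> z"
    thus "v (\<Sum>i<N. F.Y i t * indicator {r i..<r (Suc i)} z) = c (Suc N)"
      using step_sum(2)[of N r z, OF rm, simplified] V2 WN by (simp add: c_def)
  qed
  have valbound: "v R \<le> v (\<Sum>i<N. F.Y i t * indicator {r i..<r (Suc i)} z) \<and>
      v (\<Sum>i<N. F.Y i t * indicator {r i..<r (Suc i)} z) \<le> vmax"
    if rm: "\<And>k. k < N \<Longrightarrow> r k < r (Suc k)" for r :: "nat \<Rightarrow> real" and z :: real
  proof -
    consider "z < r 0" | "r N \<le> z" | k where "k < N" "r k \<le> z" "z < r (Suc k)"
      using step_cases[of N r z, OF rm, simplified] by blast
    thus ?thesis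
    proof cases
      case 1 thus ?thesis using step_sum(1)[of N r z, OF rm, simplified] V2 vR by simp
    next
      case 2 thus ?thesis using step_sum(2)[of N r z, OF rm, simplified] V2 vR by simp
    next
      case 3 thus ?thesis using step_sum(3)[of N r k z, OF rm, simplified] Wlow[of t k] Wup[of t k] t0
        by (simp add: F.W_def)
    qed
  qed
  define Ssum where "Ssum = (\<Sum>k<Suc N. \<bar>c (Suc k) - c k\<bar>)"
  have TVh: "TV (\<lambda>z. v (rho_hat L x n t z)) = ereal Ssum"
    unfolding hat Ssum_def by (rule TVgen[of p, OF pm])
  have TVc: "TV (\<lambda>z. v (rho_check L x n t z)) = ereal Ssum"
    unfolding chk Ssum_def by (rule TVgen[of q, OF qm])
  define a where "a k = F.W (Suc k) t - F.W k t" for k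
  have Ssplit: "Ssum = \<bar>F.W 0 t - vmax\<bar> + (\<Sum>k<N. \<bar>a k\<bar>)"
    unfolding Ssum_def sum.lessThan_Suc_shift by (simp add: c_def a_def)
  have asum: "(\<Sum>k<N. a k) = vmax - F.W 0 t"
    unfolding a_def using sum_lessThan_telescope[of "\<lambda>k. F.W k t" N] WN by simp
  have absa: "\<bar>a k\<bar> = 2 * max (a k) 0 - a k" for k by (simp add: max_def)
  have "Ssum = 2 * (\<Sum>k<N. max (a k) 0)"
  proof -
    have "(\<Sum>k<N. \<bar>a k\<bar>) = 2 * (\<Sum>k<N. max (a k) 0) - (\<Sum>k<N. a k)"
      unfolding absa by (simp add: sum_subtractf sum_distrib_left)
    thus ?thesis using Ssplit asum Wup[of t 0] t0 by simp
  qed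
  also have "\<dots> \<le> 2 * (\<Sum>k<N. F.D k t / t)"
  proof -
    have "max (a k) 0 \<le> F.D k t / t" if "k < N" for k
    proof -
      have Dk: "F.D k t > 0" using F.Dpos[of t k] t0 that by simp
      have "t * (a k / F.D k t) \<le> 1" using F.oleinik[OF t0 that] by (simp add: a_def)
      hence "t * a k \<le> F.D k t" using Dk by (simp add: pos_divide_le_eq mult.commute)
      hence "a k \<le> F.D k t / t" using t0 by (simp add: pos_le_divide_eq mult.commute)
      moreover have "0 \<le> F.D k t / t" using Dk t0 by simp
      ultimately show ?thesis by simp
    qed
    thus ?thesis by (intro mult_left_mono sum_mono) auto
  qed
  also have "\<dots> = 2 * ((x n N t - x n 0 t) / t)"
  proof -
    have "(\<Sum>k<N. F.D k t / t) = (\<Sum>k<N. F.D k t) / t" by (simp add: sum_divide_distrib)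
    also have "(\<Sum>k<N. F.D k t) = x n N t - x n 0 t"
      unfolding F.D_def by (rule sum_lessThan_telescope)
    finally show ?thesis by simp
  qed
  also have "\<dots> \<le> 2 * (((xmax rho - xmin rho) + (vmax - v R) * t) / t)"
  proof -
    have "x n N t \<le> x n N 0 + vmax * t" using F.XN_bound t0 by simp
    moreover have "x n 0 0 + v R * t \<le> x n 0 t"
      using F.X0_bound[of t "v R"] t0 Npos Wlow[of _ 0] by simp
    moreover have "x n N 0 \<le> xmax rho" using x0[of N] xbN by simp
    moreover have "x n 0 0 = xmin rho" using x0[of 0] by simp
    ultimately have "x n N t - x n 0 t \<le> (xmax rho - xmin rho) + (vmax - v R) * t"
      by (simp add: algebra_simps)
    thus ?thesis using t0 by (intro mult_left_mono divide_right_mono) auto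
  qed
  also have "\<dots> = 2 * (xmax rho - xmin rho) / t + 2 * (vmax - v R)"
    using t0 by (simp add: field_simps)
  also have "\<dots> \<le> 2 * (xmax rho - xmin rho) / \<delta> + 3 * (vmax - v R)"
  proof -
    have "x n 0 0 \<le> x n N 0" using pmono_gen[of N "\<lambda>k. x n k 0" 0 N] F.ord[of 0] by simp
    hence xx: "0 \<le> xmax rho - xmin rho" using x0[of 0] x0[of N] xbN by simp
    have "2 * (xmax rho - xmin rho) / t \<le> 2 * (xmax rho - xmin rho) / \<delta>"
      using xx tdelta delta_pos by (intro divide_left_mono) auto
    thus ?thesis using vR by simp
  qed
  finally have Sb: "Ssum \<le> 3 * (vmax - v (Linf_norm rho)) + 2 * (xmax rho - xmin rho) / \<delta>"
    by (simp add: R_def)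
  show "TV (\<lambda>z. v (rho_hat L x n t z)) = TV (\<lambda>z. v (rho_check L x n t z)) \<and>
     TV (\<lambda>z. v (rho_hat L x n t z))
        \<le> ereal (3 * (vmax - v (Linf_norm rho)) + 2 * (xmax rho - xmin rho) / \<delta>) \<and>
     (\<forall>z. v (Linf_norm rho) \<le> v (rho_hat L x n t z) \<and> v (rho_hat L x n t z) \<le> vmax) \<and>
     (\<forall>z. v (Linf_norm rho) \<le> v (rho_check L x n t z) \<and> v (rho_check L x n t z) \<le> vmax)"
    using TVh TVc Sb valbound[of p, OF pm] valbound[of q, OF qm] unfolding hat chk R_def by simp
qed

end
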